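(* Let $\rho>0$, $c>0$, $l>0$, $h_0>0$, $k_0>0$, $\beta>0$, $T_f\in\mathbb{R}$ and $T_\infty<T_f$ be constants, and let $k(T)=k_0\left(1+\beta\frac{T-T_\infty}{T_f-T_\infty}\right)$. Put $\alpha_0=\frac{k_0}{\rho c}$, $\mathrm{Ste}_\infty=\frac{c(T_f-T_\infty)}{l}$, $\mathrm{Bi}=\frac{h_0\sqrt{\alpha_0}}{k_0}$ and $\gamma=2\,\mathrm{Bi}$. Consider the Stefan problem of finding $T(x,t)$ and $s(t)$ such that \begin{align*} &\rho c\, T_t(x,t)=(k(T(x,t))T_x(x,t))_x, && 0<x<s(t),\ t>0,\\ &s(0)=0,&&\\ &T(s(t),t)=T_f, && t>0,\\ &k(T_f)T_x(s(t),t)=\rho l\,\dot s(t), && t>0,\\ &k(T(0,t))T_x(0,t)=\frac{h_0}{\sqrt t}\,(T(0,t)-T_\infty), && t>0. \end{align*} Then this problem has the solution $$T(x,t)=(T_f-T_\infty)\,\varphi\!\left(\frac{x}{2\sqrt{\alpha_0 t}}\right)+T_\infty\quad(0<x<s(t),\ t>0),\qquad s(t)=2\lambda\sqrt{\alpha_0 t}\quad(t>0),$$ with a function $\varphi$ and a parameter $\lambda>0$, if and only if $\varphi$ and $\lambda$ satisfy \begin{align*} &[(1+\beta y(\eta))y'(\eta)]'+2\eta y'(\eta)=0, && 0<\eta<\lambda,\\ &y'(0)+\beta y(0)y'(0)-\gamma y(0)=0,&&\\ &y(\lambda)=1,&& \end{align*} (with $y=\varphi$) together with the condition $$\frac{\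varphi'(\lambda)}{\lambda}=\frac{2}{(1+\beta)\,\mathrm{Ste}_\infty}.$$
   Context: $T$ is the temperature of the solid region $0<x<s(t)$ and $s$ is the free boundary; $\mathrm{Ste}_\infty$ is the Stefan number and $\mathrm{Bi}$ the generalized Biot number. *)

theory Defs
  imports "HOL-Analysis.Analysis"
begin

definition kcond :: "real \<Rightarrow> real \<Rightarrow> real \<Rightarrow> real \<Rightarrow> real \<Rightarrow> real" where
  "kcond k0 \<beta> Tf Tinf T = k0 * (1 + \<beta> * (T - Tinf) / (Tf - Tinf))"

definition alpha0 :: "real \<Rightarrow> real \<Rightarrow> real \<Rightarrow> real" where
  "alpha0 k0 \<rho> c = k0 / (\<rho> * c)"

definition Ste_inf :: "real \<Rightarrow> real \<Rightarrow> real \<Rightarrow> real \<Rightarrow> real" where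
  "Ste_inf c Tf Tinf l = c * (Tf - Tinf) / l"

definition Biot :: "real \<Rightarrow> real \<Rightarrow> real \<Rightarrow> real \<Rightarrow> real" where
  "Biot h0 k0 \<rho> c = h0 * sqrt (alpha0 k0 \<rho> c) / k0"

definition Tx :: "(real \<Rightarrow> real \<Rightarrow> real) \<Rightarrow> (real \<Rightarrow> real) \<Rightarrow> real \<Rightarrow> real \<Rightarrow> real" where
  "Tx T s x t = vector_derivative (\<lambda>\<xi>. T \<xi> t) (at x within {0..s t})"

definition stefan_solution ::
  "real \<Rightarrow> real \<Rightarrow> real \<Rightarrow> real \<Rightarrow> (real \<Rightarrow> real) \<Rightarrow> real \<Rightarrow> real \<Rightarrow>
   (real \<Rightarrow> real \<Rightarrow> real) \<Rightarrow> (real \<Rightarrow> real) \<Rightarrow> bool" where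
  "stefan_solution \<rho> c l h0 k Tf Tinf T s \<longleftrightarrow>
     s 0 = 0 \<and>
     (\<forall>t>0. s differentiable (at t)) \<and>
     (\<forall>t>0. \<forall>x\<in>{0..s t}. (\<lambda>\<xi>. T \<xi> t) differentiable (at x within {0..s t})) \<and>
     (\<forall>t>0. \<forall>x\<in>{0<..<s t}.
        (\<lambda>\<tau>. T x \<tau>) differentiable (at t) \<and>
        ((\<lambda>\<xi>. k (T \<xi> t) * Tx T s \<xi> t) has_real_derivative
            \<rho> * c * deriv (\<lambda>\<tau>. T x \<tau>) t) (at x)) \<and>
     (\<forall>t>0. T (s t) t = Tf) \<and>
     (\<forall>t>0. k Tf * Tx T s (s t) t = \<rho> * l * deriv s t) \<and>
     (\<forall>t>0. k (T 0 t) * Tx T s 0 t = h0 / sqrt t * (T 0 t - Tinf))"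

definition dy :: "(real \<Rightarrow> real) \<Rightarrow> real \<Rightarrow> real \<Rightarrow> real" where
  "dy y lam \<eta> = vector_derivative y (at \<eta> within {0..lam})"

definition ode_problem :: "real \<Rightarrow> real \<Rightarrow> (real \<Rightarrow> real) \<Rightarrow> real \<Rightarrow> bool" where
  "ode_problem \<beta> \<gamma> y lam \<longleftrightarrow>
     (\<forall>\<eta>\<in>{0..lam}. y differentiable (at \<eta> within {0..lam})) \<and>
     (\<forall>\<eta>\<in>{0<..<lam}.
        ((\<lambda>z. (1 + \<beta> * y z) * dy y lam z) has_real_derivative
            - 2 * \<eta> * dy y lam \<eta>) (at \<eta>)) \<and>
     dy y lam 0 + \<beta> * y 0 * dy y lam 0 - \<gamma> * y 0 = 0 \<and>
     y lam = 1"

end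

theory Submission
  imports Defs
begin
lemma Icc_nbot: fixes x L :: real assumes "L > 0" "x \<in> {0..L}" shows "at x within {0..L} \<noteq> bot"
  using assms by (simp add: trivial_limit_within)

lemma scale_vd:
  fixes g :: "real \<Rightarrow> real"
  assumes "c > 0" "(g has_vector_derivative d) (at (c*x) within {0..c*L})"
  shows "((\<lambda>z. g(c*z)) has_vector_derivative (c*d)) (at x within {0..L})"
proof -
  have im: "(\<lambda>z. c*z) ` {0..L} = {0..c*L}"
    using assms(1) image_mult_atLeastAtMost[of c 0 L] by simp
  have "((\<lambda>z. c*z) has_vector_derivative c) (at x within {0..L})"
    using has_real_derivative_iff_has_vector_derivative
    by (metis DERIV_cmult_Id)
  from vector_diff_chain_within[OF this, of g d] assms(2) im
  show ?thesis by (simp add: o_def)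
qed

lemma scale2:
  fixes g :: "real \<Rightarrow> real"
  assumes "c > 0" "(g has_real_derivative d) (at (c*x) within {0..c*L})"
  shows "((\<lambda>z. A * g(c*z) + B) has_real_derivative (A*(c*d))) (at x within {0..L})"
proof -
  have "((\<lambda>z. g(c*z)) has_real_derivative (c*d)) (at x within {0..L})"
    using scale_vd[OF assms(1)] assms(2) has_real_derivative_iff_has_vector_derivative by blast
  then show ?thesis by (auto intro!: derivative_eq_intros)
qed

lemma spatial:
  fixes \<phi> :: "real \<Rightarrow> real" and W lam D E \<xi> :: real
  assumes W: "W > 0" and lam: "lam > 0" and D: "D \<noteq> 0" and xi: "\<xi> \<in> {0..lam*W}"
  shows "(\<lambda>z. D*\<phi>(z/W)+E) differentiable (at \<xi> within {0..lam*W}) \<longleftrightarrow> \<phi> differentiable (at (\<xi>/W) within {0..lam})"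
   and "\<phi> differentiable (at (\<xi>/W) within {0..lam}) \<Longrightarrow>
     vector_derivative (\<lambda>z. D*\<phi>(z/W)+E) (at \<xi> within {0..lam*W}) = D/W * vector_derivative \<phi> (at (\<xi>/W) within {0..lam})"
proof -
  have fwd: "((\<lambda>z. D*\<phi>(z/W)+E) has_real_derivative (D/W*d)) (at \<xi> within {0..lam*W})"
    if "(\<phi> has_real_derivative d) (at (\<xi>/W) within {0..lam})" for d
  proof -
    have "(\<phi> has_real_derivative d) (at ((1/W)*\<xi>) within {0..(1/W)*(lam*W)})"
      using that W by simp
    from scale2[OF _ this, of D E] W show ?thesis by simp
  qed
  have bwd: "(\<phi> has_real_derivative d/D*W) (at (\<xi>/W) within {0..lam})"
    if "((\<lambda>z. D*\<phi>(z/W)+E) has_real_derivative d) (at \<xi> within {0..lam*W})" for d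
  proof -
    have "((\<lambda>z. D*\<phi>(z/W)+E) has_real_derivative d) (at (W*(\<xi>/W)) within {0..W*lam})"
      using that W by (simp add: mult.commute)
    from scale2[OF W this, of "1/D" "-E/D"] W D
    have "((\<lambda>z. 1/D * (D * \<phi> (W * z / W) + E) + - E / D) has_real_derivative d/D*W) (at (\<xi>/W) within {0..lam})"
      by (simp add: mult_ac)
    moreover have "(\<lambda>z. 1/D * (D * \<phi> (W * z / W) + E) + - E / D) = \<phi>"
      using W D by (auto simp: field_simps)
    ultimately show ?thesis by simp
  qed
  show "(\<lambda>z. D*\<phi>(z/W)+E) differentiable (at \<xi> within {0..lam*W}) \<longleftrightarrow> \<phi> differentiable (at (\<xi>/W) within {0..lam})"
    using fwd bwd by (metis real_differentiable_def)
  assume "\<phi> differentiable (at (\<xi>/W) within {0..lam})"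
  then have "(\<phi> has_real_derivative vector_derivative \<phi> (at (\<xi>/W) within {0..lam})) (at (\<xi>/W) within {0..lam})"
    using vector_derivative_works has_real_derivative_iff_has_vector_derivative by blast
  from fwd[OF this] show "vector_derivative (\<lambda>z. D*\<phi>(z/W)+E) (at \<xi> within {0..lam*W}) = D/W * vector_derivative \<phi> (at (\<xi>/W) within {0..lam})"
    using Icc_nbot[of "lam*W" \<xi>] W lam xi vector_derivative_within has_real_derivative_iff_has_vector_derivative
    by (metis mult_pos_pos)
qed
lemma time_deriv:
  fixes \<phi> :: "real \<Rightarrow> real"
  assumes a: "a > 0" and t: "t > 0" and p: "(\<phi> has_real_derivative p) (at (x/(2 * sqrt(a*t))))"
  shows "((\<lambda>\<tau>. D*\<phi>(x/(2 * sqrt(a*\<tau>)))+E) has_real_derivative D*p*(-(x/(2 * sqrt(a*t)))/(2*t))) (at t)"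
proof -
  have inner: "((\<lambda>\<tau>. x/(2 * sqrt(a*\<tau>))) has_real_derivative (-(x/(2 * sqrt(a*t)))/(2*t))) (at t)"
  proof -
    have "((\<lambda>\<tau>. x/(2 * sqrt(a*\<tau>))) has_real_derivative
       (- (x * (2 * (inverse (sqrt (a*t)) / 2 * a))) / (2 * sqrt(a*t))^2)) (at t)"
      using a t by (auto intro!: derivative_eq_intros simp: power2_eq_square) (use mult_pos_pos[OF a t] in linarith)
    moreover have "(- (x * (2 * (inverse (sqrt (a*t)) / 2 * a))) / (2 * sqrt(a*t))^2) = (-(x/(2 * sqrt(a*t)))/(2*t))"
      using a t by (simp add: field_simps power2_eq_square real_sqrt_mult)
    ultimately show ?thesis by simp
  qed
  have "((\<lambda>\<tau>. \<phi>(x/(2 * sqrt(a*\<tau>)))) has_real_derivative p*(-(x/(2 * sqrt(a*t)))/(2*t))) (at t)"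
    using DERIV_chain2[OF p inner] .
  then show ?thesis by (auto intro!: derivative_eq_intros)
qed

lemma deriv_scale_iff:
  fixes F G :: "real \<Rightarrow> real"
  assumes W: "W > 0" and K: "K \<noteq> 0" and S: "open S" "x \<in> S" and eq: "\<And>\<xi>. \<xi>\<in>S \<Longrightarrow> F \<xi> = K*G(\<xi>/W)"
  shows "(F has_real_derivative R) (at x) \<longleftrightarrow> (G has_real_derivative (R*W/K)) (at (x/W))"
proof
  assume F: "(F has_real_derivative R) (at x)"
  have S': "open ((\<lambda>z. W*z) -` S)"
    by (rule open_vimage[OF S(1)]) (auto intro!: continuous_intros)
  have "((\<lambda>z. F (W*z) / K) has_real_derivative (R*W/K)) (at (x/W))"
  proof -
    have "(F has_real_derivative R) (at (W*(x/W)))" using F W by simp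
    from DERIV_chain2[OF this DERIV_cmult_Id[of W "x/W"]]
    have "((\<lambda>z. F (W*z)) has_real_derivative R*W) (at (x/W))" by simp
    then show ?thesis using K by (auto intro!: derivative_eq_intros)
  qed
  then show "(G has_real_derivative (R*W/K)) (at (x/W))"
    apply (rule has_field_derivative_transform_within_open[OF _ S'])
    using S(2) W K eq by auto
next
  assume G: "(G has_real_derivative (R*W/K)) (at (x/W))"
  have "((\<lambda>\<xi>. K * G (\<xi>/W)) has_real_derivative R) (at x)"
  proof -
    have "((\<lambda>\<xi>. \<xi>/W) has_real_derivative 1/W) (at x)" using W by (auto intro!: derivative_eq_intros)
    from DERIV_chain2[OF G this] 
    have "((\<lambda>\<xi>. G (\<xi>/W)) has_real_derivative R/K) (at x)" using W by simp
    then show ?thesis using K by (auto intro!: derivative_eq_intros)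
  qed
  then show "(F has_real_derivative R) (at x)"
    apply (rule has_field_derivative_transform_within_open[OF _ S(1) S(2)])
    using eq by auto
qed
lemma bc0: fixes t a k0 \<beta> f0 D p0 h0 Tinf :: real
  assumes "t>0" "a>0" "k0>0" "D>0"
  shows "(k0 * (1 + \<beta> * f0) * (D / (2 * sqrt a * sqrt t) * p0) = h0 / sqrt t * (D * f0 + Tinf - Tinf))
     \<longleftrightarrow> (p0 + \<beta> * f0 * p0 - 2 * (h0 * sqrt a / k0) * f0 = 0)"
proof -
  have st: "sqrt t > 0" "sqrt a > 0" using assms by auto
  define q where "q = D / (2 * sqrt a * sqrt t)"
  have q: "q \<noteq> 0" using st assms by (simp add: q_def)
  have e1: "k0 * (1 + \<beta> * f0) * (D / (2 * sqrt a * sqrt t) * p0) = (k0 * (1 + \<beta> * f0) * p0) * q"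
    by (simp add: q_def)
  have e2: "h0 / sqrt t * (D * f0 + Tinf - Tinf) = (2 * h0 * sqrt a * f0) * q"
    using st by (simp add: q_def field_simps)
  have "(k0 * (1 + \<beta> * f0) * (D / (2 * sqrt a * sqrt t) * p0) = h0 / sqrt t * (D * f0 + Tinf - Tinf))
     \<longleftrightarrow> k0 * (1 + \<beta> * f0) * p0 = 2 * h0 * sqrt a * f0"
    unfolding e1 e2 using q mult_cancel_right by blast
  also have "\<dots> \<longleftrightarrow> (p0 + \<beta> * f0 * p0 - 2 * (h0 * sqrt a / k0) * f0 = 0)"
    using assms by (simp add: field_simps)
  finally show ?thesis .
qed
lemma bcs: fixes t a k0 \<beta> D p \<rho> c l lam :: real
  assumes "t>0" "k0>0" "D>0" "\<rho>>0" "c>0" "l>0" "lam>0" "\<beta>>0"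
  shows "(k0 * (1 + \<beta>) * (D / (2 * sqrt (k0 / (\<rho> * c) * t)) * p) = \<rho> * l * (lam * (k0 / (\<rho> * c)) / sqrt (k0 / (\<rho> * c) * t)))
     \<longleftrightarrow> (p / lam = 2 / ((1 + \<beta>) * (c * D / l)))"
proof -
  have st: "sqrt (k0 / (\<rho> * c) * t) > 0" using assms by auto
  define q where "q = 1 / (2 * sqrt (k0 / (\<rho> * c) * t))"
  have q: "q \<noteq> 0" using st assms by (simp add: q_def)
  have e1: "k0 * (1 + \<beta>) * (D / (2 * sqrt (k0 / (\<rho> * c) * t)) * p) = (k0 * (1 + \<beta>) * D * p) * q"
    by (simp add: q_def)
  have e2: "\<rho> * l * (lam * (k0 / (\<rho> * c)) / sqrt (k0 / (\<rho> * c) * t)) = (2 * l * lam * k0 / c) * q"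
    using st assms by (simp add: q_def field_simps)
  have "(k0 * (1 + \<beta>) * (D / (2 * sqrt (k0 / (\<rho> * c) * t)) * p) = \<rho> * l * (lam * (k0 / (\<rho> * c)) / sqrt (k0 / (\<rho> * c) * t)))
    \<longleftrightarrow> k0 * (1 + \<beta>) * D * p = 2 * l * lam * k0 / c" unfolding e1 e2 using q mult_cancel_right by blast
  also have "\<dots> \<longleftrightarrow> k0 * (1 + \<beta>) * D * p * c = 2 * l * lam * k0" using assms by (simp add: eq_divide_eq)
  also have "\<dots> \<longleftrightarrow> k0 * ((1 + \<beta>) * D * p * c) = k0 * (2 * l * lam)" by (simp add: mult_ac)
  also have "\<dots> \<longleftrightarrow> (1 + \<beta>) * D * p * c = 2 * l * lam" using assms by simp
  also have "\<dots> \<longleftrightarrow> p * ((1 + \<beta>) * c * D) = 2 * l * lam" by (simp add: mult_ac)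
  also have "\<dots> \<longleftrightarrow> p = 2 * l * lam / ((1 + \<beta>) * c * D)"
    using assms by (simp add: eq_divide_eq)
  also have "\<dots> \<longleftrightarrow> p = 2 / ((1 + \<beta>) * (c * D / l)) * lam"
  proof -
    have "2 / ((1 + \<beta>) * (c * D / l)) * lam = 2 * l * lam / ((1 + \<beta>) * c * D)"
      using assms by (simp add: field_simps)
    then show ?thesis by (simp add: mult_ac)
  qed
  also have "\<dots> \<longleftrightarrow> (p / lam = 2 / ((1 + \<beta>) * (c * D / l)))"
    using assms by (simp add: divide_eq_eq)
  finally show ?thesis .
qed

theorem theorem2p1:
  fixes \<rho> c l h0 k0 \<beta> Tf Tinf lam :: real and \<phi> :: "real \<Rightarrow> real"
  assumes "\<rho> > 0" "c > 0" "l > 0" "h0 > 0" "k0 > 0" "\<beta> > 0" "Tinf < Tf" "lam > 0"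
  shows "stefan_solution \<rho> c l h0 (kcond k0 \<beta> Tf Tinf) Tf Tinf
           (\<lambda>x t. (Tf - Tinf) * \<phi> (x / (2 * sqrt (alpha0 k0 \<rho> c * t))) + Tinf)
           (\<lambda>t. 2 * lam * sqrt (alpha0 k0 \<rho> c * t))
         \<longleftrightarrow>
         ode_problem \<beta> (2 * Biot h0 k0 \<rho> c) \<phi> lam \<and>
         dy \<phi> lam lam / lam = 2 / ((1 + \<beta>) * Ste_inf c Tf Tinf l)"
proof -
  note pos = assms
  define a where "a = alpha0 k0 \<rho> c"
  have a_eq: "a = k0 / (\<rho> * c)" unfolding a_def alpha0_def ..
  have apos: "a > 0" using pos by (simp add: a_eq)
  define D where "D = Tf - Tinf"
  have Dpos: "D > 0" using pos by (simp add: D_def)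
  define T where "T = (\<lambda>x t. D * \<phi> (x / (2 * sqrt (a * t))) + Tinf)"
  define s where "s = (\<lambda>t. 2 * lam * sqrt (a * t))"
  define W where "W = (\<lambda>t. 2 * sqrt (a * t))"
  define k where "k = kcond k0 \<beta> Tf Tinf"
  define G where "G = (\<lambda>z. (1 + \<beta> * \<phi> z) * dy \<phi> lam z)"
  have Wpos: "W t > 0" if "t > 0" for t using apos that by (simp add: W_def)
  have sW: "s t = lam * W t" for t by (simp add: s_def W_def)
  have TW: "T x t = D * \<phi> (x / W t) + Tinf" for x t by (simp add: T_def W_def)
  have W2: "(W t)^2 = 4 * a * t" if "t > 0" for t
    using apos that by (simp add: W_def power2_eq_square)
  have kT: "k (T z t) = k0 * (1 + \<beta> * \<phi> (z / W t))" for z t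
    using Dpos by (simp add: k_def kcond_def TW D_def[symmetric])
  have range: "z \<in> {0..s t} \<longleftrightarrow> z / W t \<in> {0..lam}" if "t > 0" for z t
    using Wpos[OF that] pos by (auto simp: sW field_simps)
  have rangeo: "z \<in> {0<..<s t} \<longleftrightarrow> z / W t \<in> {0<..<lam}" if "t > 0" for z t
    using Wpos[OF that] pos by (auto simp: sW field_simps)
  have spd: "(\<lambda>\<xi>. T \<xi> t) differentiable (at z within {0..s t}) \<longleftrightarrow> \<phi> differentiable (at (z / W t) within {0..lam})"
    if "t > 0" "z \<in> {0..s t}" for z t
    using spatial(1)[OF Wpos[OF that(1)] pos(8), of D "z" \<phi> Tinf] that Dpos unfolding sW TW by simp
  have Txe: "Tx T s z t = D / W t * dy \<phi> lam (z / W t)"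
    if "t > 0" "z \<in> {0..s t}" "\<phi> differentiable (at (z / W t) within {0..lam})" for z t
    using spatial(2)[OF Wpos[OF that(1)] pos(8), of D "z" \<phi> Tinf] that Dpos unfolding sW TW Tx_def dy_def by simp
  have at_int: "(\<phi> has_real_derivative dy \<phi> lam \<eta>) (at \<eta>)"
    if "\<eta> \<in> {0<..<lam}" "\<phi> differentiable (at \<eta> within {0..lam})" for \<eta>
  proof -
    have "at \<eta> within {0..lam} = at \<eta>" using that(1) by (intro at_within_Icc_at) auto
    then show ?thesis using that(2) vector_derivative_works has_real_derivative_iff_has_vector_derivative
      unfolding dy_def by metis
  qed
  have tderiv: "(\<lambda>\<tau>. T x \<tau>) differentiable (at t) \<and>
      deriv (\<lambda>\<tau>. T x \<tau>) t = D * dy \<phi> lam (x / W t) * (- (x / W t) / (2 * t))"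
    if "t > 0" "x \<in> {0<..<s t}" "\<phi> differentiable (at (x / W t) within {0..lam})" for x t
  proof -
    have "(\<phi> has_real_derivative dy \<phi> lam (x / W t)) (at (x / (2 * sqrt (a * t))))"
      using at_int[OF rangeo[OF that(1), THEN iffD1, OF that(2)] that(3)] by (simp add: W_def)
    from time_deriv[OF apos that(1) this, of D Tinf]
    have "((\<lambda>\<tau>. T x \<tau>) has_real_derivative D * dy \<phi> lam (x / W t) * (- (x / W t) / (2 * t))) (at t)"
      by (simp add: T_def W_def)
    then show ?thesis using DERIV_imp_deriv real_differentiable_def by blast
  qed
  have pde_iff: "((\<lambda>\<xi>. k (T \<xi> t) * Tx T s \<xi> t) has_real_derivative \<rho> * c * deriv (\<lambda>\<tau>. T x \<tau>) t) (at x)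
      \<longleftrightarrow> (G has_real_derivative - 2 * (x / W t) * dy \<phi> lam (x / W t)) (at (x / W t))"
    if "t > 0" "x \<in> {0<..<s t}" and dif: "\<forall>\<eta>\<in>{0..lam}. \<phi> differentiable (at \<eta> within {0..lam})" for x t
  proof -
    have xr: "x / W t \<in> {0..lam}" using rangeo[OF that(1)] that(2) by auto
    have K: "k0 * D / W t \<noteq> 0" using Wpos[OF that(1)] pos Dpos by simp
    have eq: "k (T \<xi> t) * Tx T s \<xi> t = (k0 * D / W t) * G (\<xi> / W t)" if "\<xi> \<in> {0<..<s t}" for \<xi>
    proof -
      have "\<xi> / W t \<in> {0..lam}" using rangeo[OF \<open>t > 0\<close>] that by auto
      then show ?thesis using Txe[OF \<open>t > 0\<close>, of \<xi>] that dif kT by (simp add: G_def)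
    qed
    have R: "\<rho> * c * deriv (\<lambda>\<tau>. T x \<tau>) t * W t / (k0 * D / W t) = - 2 * (x / W t) * dy \<phi> lam (x / W t)"
    proof -
      have "\<rho> * c * deriv (\<lambda>\<tau>. T x \<tau>) t * W t / (k0 * D / W t)
          = \<rho> * c * (D * dy \<phi> lam (x / W t) * (- (x / W t) / (2 * t))) * (W t)^2 / (k0 * D)"
        using tderiv[OF that(1,2)] dif xr Wpos[OF that(1)] by (simp add: power2_eq_square)
      also have "\<dots> = - 2 * (x / W t) * dy \<phi> lam (x / W t)"
        unfolding W2[OF that(1)] a_eq using pos Dpos that(1) by (simp add: field_simps)
      finally show ?thesis .
    qed
    show ?thesis
      using deriv_scale_iff[OF Wpos[OF that(1)] K open_greaterThanLessThan that(2), of "\<lambda>\<xi>. k (T \<xi> t) * Tx T s \<xi> t" G]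
        eq R by simp
  qed
  have ds: "s differentiable (at t) \<and> deriv s t = lam * a / sqrt (a * t)" if "t > 0" for t
  proof -
    have at: "a * t > 0" using apos that by simp
    have "(s has_real_derivative 2 * lam * (inverse (sqrt (a * t)) / 2 * a)) (at t)"
      unfolding s_def using at by (auto intro!: derivative_eq_intros)
    moreover have "2 * lam * (inverse (sqrt (a * t)) / 2 * a) = lam * a / sqrt (a * t)"
      by (simp add: field_simps)
    ultimately have "(s has_real_derivative lam * a / sqrt (a * t)) (at t)" by simp
    then show ?thesis using DERIV_imp_deriv real_differentiable_def by blast
  qed
  have bc0': "(k0 * (1 + \<beta> * f0) * (D / W t * p0) = h0 / sqrt t * (D * f0 + Tinf - Tinf))
     \<longleftrightarrow> (p0 + \<beta> * f0 * p0 - 2 * (h0 * sqrt a / k0) * f0 = 0)" if "t > 0" for t f0 p0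
  proof -
    have Wt: "W t = 2 * sqrt a * sqrt t" by (simp add: W_def real_sqrt_mult)
    show ?thesis unfolding Wt using bc0[OF that apos pos(5) Dpos] .
  qed
  have bcs': "(k0 * (1 + \<beta>) * (D / W t * p) = \<rho> * l * (lam * a / sqrt (a * t)))
     \<longleftrightarrow> (p / lam = 2 / ((1 + \<beta>) * (c * D / l)))" if "t > 0" for t p
    unfolding W_def a_eq using bcs[OF that pos(5) Dpos pos(1,2,3) pos(8) pos(6)] .
  have kTf: "k Tf = k0 * (1 + \<beta>)" using Dpos by (simp add: k_def kcond_def D_def)

  have Biot_eq: "Biot h0 k0 \<rho> c = h0 * sqrt a / k0" by (simp add: Biot_def a_def)
  have Ste_eq: "Ste_inf c Tf Tinf l = c * D / l" by (simp add: Ste_inf_def D_def)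
  have goal_rw: "stefan_solution \<rho> c l h0 (kcond k0 \<beta> Tf Tinf) Tf Tinf
           (\<lambda>x t. (Tf - Tinf) * \<phi> (x / (2 * sqrt (alpha0 k0 \<rho> c * t))) + Tinf)
           (\<lambda>t. 2 * lam * sqrt (alpha0 k0 \<rho> c * t)) = stefan_solution \<rho> c l h0 k Tf Tinf T s"
    by (simp add: T_def s_def k_def a_def D_def)
  have sl: "s t / W t = lam" if "t > 0" for t using Wpos[OF that] by (simp add: sW)
  have send: "s t \<in> {0..s t}" "0 \<in> {0..s t}" if "t > 0" for t
    using Wpos[OF that] pos(8) by (auto simp: sW)
  have Tx0: "Tx T s 0 t = D / W t * dy \<phi> lam 0"
    if "t > 0" "\<forall>\<eta>\<in>{0..lam}. \<phi> differentiable (at \<eta> within {0..lam})" for t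
    using Txe[OF that(1) send(2)[OF that(1)]] that(2) pos(8) by simp
  have Txs: "Tx T s (s t) t = D / W t * dy \<phi> lam lam"
    if "t > 0" "\<forall>\<eta>\<in>{0..lam}. \<phi> differentiable (at \<eta> within {0..lam})" for t
    using Txe[OF that(1) send(1)[OF that(1)]] that(2) pos(8) sl[OF that(1)] by simp
  have k0': "k (D * \<phi> 0 + Tinf) = k0 * (1 + \<beta> * \<phi> 0)" using kT[of 0 1] TW[of 0 1] by simp
  have T0: "T 0 t = D * \<phi> 0 + Tinf" for t using TW[of 0 t] by simp
  have main: "stefan_solution \<rho> c l h0 k Tf Tinf T s \<longleftrightarrow>
     ode_problem \<beta> (2 * (h0 * sqrt a / k0)) \<phi> lam \<and> dy \<phi> lam lam / lam = 2 / ((1 + \<beta>) * (c * D / l))"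
  proof
    assume St: "stefan_solution \<rho> c l h0 k Tf Tinf T s"
    define t1 where "t1 = (1::real)"
    have t1: "t1 > 0" by (simp add: t1_def)
    from St have
      S3: "\<forall>t>0. \<forall>x\<in>{0..s t}. (\<lambda>\<xi>. T \<xi> t) differentiable (at x within {0..s t})" and
      S4: "\<forall>t>0. \<forall>x\<in>{0<..<s t}. (\<lambda>\<tau>. T x \<tau>) differentiable (at t) \<and>
        ((\<lambda>\<xi>. k (T \<xi> t) * Tx T s \<xi> t) has_real_derivative \<rho> * c * deriv (\<lambda>\<tau>. T x \<tau>) t) (at x)" and
      S5: "\<forall>t>0. T (s t) t = Tf" and
      S6: "\<forall>t>0. k Tf * Tx T s (s t) t = \<rho> * l * deriv s t" and
      S7: "\<forall>t>0. k (T 0 t) * Tx T s 0 t = h0 / sqrt t * (T 0 t - Tinf)"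
      unfolding stefan_solution_def by auto
    have dif: "\<forall>\<eta>\<in>{0..lam}. \<phi> differentiable (at \<eta> within {0..lam})"
    proof
      fix \<eta> assume \<eta>: "\<eta> \<in> {0..lam}"
      have zW: "\<eta> * W t1 / W t1 = \<eta>" using Wpos[OF t1] by simp
      have z: "\<eta> * W t1 \<in> {0..s t1}" using range[OF t1, of "\<eta> * W t1"] \<eta> zW by simp
      show "\<phi> differentiable (at \<eta> within {0..lam})" using spd[OF t1 z] S3 t1 z zW by metis
    qed
    have pde: "\<forall>\<eta>\<in>{0<..<lam}. ((\<lambda>z. (1 + \<beta> * \<phi> z) * dy \<phi> lam z) has_real_derivative - 2 * \<eta> * dy \<phi> lam \<eta>) (at \<eta>)"
    proof
      fix \<eta> assume \<eta>: "\<eta> \<in> {0<..<lam}"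
      have zW: "\<eta> * W t1 / W t1 = \<eta>" using Wpos[OF t1] by simp
      have z: "\<eta> * W t1 \<in> {0<..<s t1}" using rangeo[OF t1, of "\<eta> * W t1"] \<eta> zW by simp
      from pde_iff[OF t1 z dif] S4 t1 z zW
      show "((\<lambda>z. (1 + \<beta> * \<phi> z) * dy \<phi> lam z) has_real_derivative - 2 * \<eta> * dy \<phi> lam \<eta>) (at \<eta>)"
        by (simp add: G_def)
    qed
    have bc: "dy \<phi> lam 0 + \<beta> * \<phi> 0 * dy \<phi> lam 0 - 2 * (h0 * sqrt a / k0) * \<phi> 0 = 0"
    proof -
      from S7 t1 have "k (T 0 t1) * Tx T s 0 t1 = h0 / sqrt t1 * (T 0 t1 - Tinf)" by blast
      then have "k0 * (1 + \<beta> * \<phi> 0) * (D / W t1 * dy \<phi> lam 0) = h0 / sqrt t1 * (D * \<phi> 0 + Tinf - Tinf)"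
        unfolding Tx0[OF t1 dif] k0' T0[of t1] .
      then show ?thesis using bc0'[OF t1] by blast
    qed
    have one: "\<phi> lam = 1"
    proof -
      have "D * \<phi> lam + Tinf = Tf" using S5 t1 TW[of "s t1" t1] sl[OF t1] by simp
      then have "D * (\<phi> lam - 1) = 0" by (simp add: D_def algebra_simps)
      then show ?thesis using Dpos by simp
    qed
    have st: "dy \<phi> lam lam / lam = 2 / ((1 + \<beta>) * (c * D / l))"
    proof -
      from S6 t1 have "k Tf * Tx T s (s t1) t1 = \<rho> * l * deriv s t1" by blast
      then have "k0 * (1 + \<beta>) * (D / W t1 * dy \<phi> lam lam) = \<rho> * l * (lam * a / sqrt (a * t1))"
        unfolding Txs[OF t1 dif] kTf ds[OF t1, THEN conjunct2] .
      then show ?thesis using bcs'[OF t1] by blast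
    qed
    show "ode_problem \<beta> (2 * (h0 * sqrt a / k0)) \<phi> lam \<and> dy \<phi> lam lam / lam = 2 / ((1 + \<beta>) * (c * D / l))"
      unfolding ode_problem_def using dif pde bc one st by auto
  next
    assume O: "ode_problem \<beta> (2 * (h0 * sqrt a / k0)) \<phi> lam \<and> dy \<phi> lam lam / lam = 2 / ((1 + \<beta>) * (c * D / l))"
    then have dif: "\<forall>\<eta>\<in>{0..lam}. \<phi> differentiable (at \<eta> within {0..lam})" and
      pde: "\<forall>\<eta>\<in>{0<..<lam}. (G has_real_derivative - 2 * \<eta> * dy \<phi> lam \<eta>) (at \<eta>)" and
      bc: "dy \<phi> lam 0 + \<beta> * \<phi> 0 * dy \<phi> lam 0 - 2 * (h0 * sqrt a / k0) * \<phi> 0 = 0" and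
      one: "\<phi> lam = 1" and
      st: "dy \<phi> lam lam / lam = 2 / ((1 + \<beta>) * (c * D / l))"
      unfolding ode_problem_def G_def by auto
    show "stefan_solution \<rho> c l h0 k Tf Tinf T s"
      unfolding stefan_solution_def
    proof (intro conjI allI impI ballI)
      show "s 0 = 0" by (simp add: s_def)
    next
      fix t :: real assume "t > 0" then show "s differentiable (at t)" using ds by blast
    next
      fix t x :: real assume t: "t > 0" and x: "x \<in> {0..s t}"
      show "(\<lambda>\<xi>. T \<xi> t) differentiable (at x within {0..s t})"
        using spd[OF t x] range[OF t] x dif by blast
    next
      fix t x :: real assume t: "t > 0" and x: "x \<in> {0<..<s t}"
      have xr: "x / W t \<in> {0..lam}" "x / W t \<in> {0<..<lam}" using rangeo[OF t] x by auto
      show "(\<lambda>\<tau>. T x \<tau>) differentiable (at t)" using tderiv[OF t x] dif xr by blast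
      show "((\<lambda>\<xi>. k (T \<xi> t) * Tx T s \<xi> t) has_real_derivative \<rho> * c * deriv (\<lambda>\<tau>. T x \<tau>) t) (at x)"
        using pde_iff[OF t x dif] pde xr by blast
    next
      fix t :: real assume t: "t > 0"
      show "T (s t) t = Tf" using TW[of "s t" t] sl[OF t] one by (simp add: D_def)
    next
      fix t :: real assume t: "t > 0"
      show "k Tf * Tx T s (s t) t = \<rho> * l * deriv s t"
        unfolding Txs[OF t dif] kTf ds[OF t, THEN conjunct2] using bcs'[OF t] st by blast
    next
      fix t :: real assume t: "t > 0"
      show "k (T 0 t) * Tx T s 0 t = h0 / sqrt t * (T 0 t - Tinf)"
        unfolding Tx0[OF t dif] k0' T0[of t] using bc0'[OF t] bc by blast
    qed
  qed
  show ?thesis unfolding goal_rw main Biot_eq Ste_eq ..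
qed

end
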